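(* Let $\alpha=[a_0;a_1,\dots,a_r,\overline{b_1,\dots,b_s}]\in\widehat K$ with $r\ge1$, $s\ge1$, $a_0\in R$ and $a_1,\dots,a_r,b_1,\dots,b_s$ nonconstant polynomials in $R$, and let $\alpha^\sigma$ be its Galois conjugate over $K$. If $a_r\ne b_s$, then $h(\alpha)=|\alpha-\alpha^\sigma|^{-1}=q^{\,2\left(\sum_{i=1}^r\deg a_i\right)-\deg a_r-\deg b_s+\deg(a_r-b_s)}.$
   Context: $q$ is a positive power of a prime, $R=\mathbb F_q[Y]$, $K=\mathbb F_q(Y)$, $\widehat K=\mathbb F_q((Y^{-1}))$ with absolute value $|P/Q|=q^{\deg P-\deg Q}$ extended to $\widehat K$. $[a_0;a_1,a_2,\dots]$ denotes the continued fraction $a_0+1/(a_1+1/(a_2+\cdots))$ and an overline indicates a block repeated infinitely often. Such an eventually periodic expansion represents a quadratic power series over $K$. *)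

theory Defs
  imports Complex_Main "HOL-Library.Cardinality" "HOL-Computational_Algebra.Polynomial" "HOL-Computational_Algebra.Formal_Laurent_Series"
begin

text \<open>The field F_q is modelled by a finite field type 'a, q = CARD('a).
  The completion F_q((Y^-1)) is modelled by Laurent series 'a fls in the variable
  X = Y^-1; thus Y corresponds to fls_X_inv.\<close>

definition emb :: "'a::field poly \<Rightarrow> 'a fls" where
  "emb p = poly (map_poly fls_const p) fls_X_inv"

text \<open>Absolute value |f| = q^(-v(f)), where v is the X-adic (i.e. Y^-1-adic) valuation;
  for f = emb P this is q^(deg P).\<close>

definition fls_absv :: "'a::{field,finite} fls \<Rightarrow> real" where
  "fls_absv f = (if f = 0 then 0 else real CARD('a) powr (- real_of_int (fls_subdegree f)))"

fun cf_list :: "'a::field fls list \<Rightarrow> 'a fls" where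
  "cf_list [] = 0"
| "cf_list [c] = c"
| "cf_list (c # cs) = c + inverse (cf_list cs)"

definition cf_convergent :: "(nat \<Rightarrow> 'a::field poly) \<Rightarrow> nat \<Rightarrow> 'a fls" where
  "cf_convergent c n = cf_list (map (\<lambda>i. emb (c i)) [0..<Suc n])"

text \<open>Partial quotients of [a0; a1, ..., ar, overline(b1, ..., bs)].\<close>

definition eperiodic_pq :: "(nat \<Rightarrow> 'a poly) \<Rightarrow> nat \<Rightarrow> (nat \<Rightarrow> 'a poly) \<Rightarrow> nat \<Rightarrow> nat \<Rightarrow> 'a poly" where
  "eperiodic_pq a r b s n = (if n \<le> r then a n else b ((n - r - 1) mod s + 1))"

definition galois_conj :: "'a::field fls \<Rightarrow> 'a fls" where
  "galois_conj \<alpha> = (SOME \<beta>. \<exists>A B C. A \<noteq> 0 \<and> \<alpha> \<notin> {emb P / emb Q | P Q. Q \<noteq> 0} \<and>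
      emb A * \<alpha>\<^sup>2 + emb B * \<alpha> + emb C = 0 \<and> \<beta> = - emb B / emb A - \<alpha>)"

end

theory Submission
  imports Defs
begin


lemma emb_pCons: "emb (pCons c p) = fls_const c + fls_X_inv * emb (p::'a::field poly)"
  by (simp add: emb_def map_poly_pCons)

lemma emb_nth: "fls_nth (emb (p::'a::field poly)) k = (if k \<le> 0 then coeff p (nat (-k)) else 0)"
proof (induction p arbitrary: k)
  case 0
  then show ?case by (simp add: emb_def)
next
  case (pCons c p)
  show ?case
    using pCons.IH[of "k+1"]
    by (auto simp: emb_pCons fls_X_inv_times_conv_shift coeff_pCons nat_add_distrib
             split: nat.splits intro!: arg_cong[where f="coeff p"])
qed

lemma emb_add: "emb (p + q) = emb p + emb (q::'a::field poly)"
  by (rule fls_eqI) (simp add: emb_nth)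

lemma emb_minus: "emb (- p) = - emb (p::'a::field poly)"
  by (rule fls_eqI) (simp add: emb_nth)

lemma emb_diff: "emb (p - q) = emb p - emb (q::'a::field poly)"
  by (rule fls_eqI) (simp add: emb_nth)

lemma emb_0 [simp]: "emb 0 = (0::'a::field fls)"
  by (simp add: emb_def)

lemma emb_smult: "emb (smult c p) = fls_const c * emb (p::'a::field poly)"
  by (rule fls_eqI) (simp add: emb_nth)

lemma emb_1 [simp]: "emb 1 = (1::'a::field fls)"
  by (simp add: emb_def)

lemma emb_mult: "emb (p * q) = emb p * emb (q::'a::field poly)"
proof (induction p)
  case 0
  then show ?case by simp
next
  case (pCons c p)
  have "emb (pCons c p * q) = emb (smult c q + pCons 0 (p * q))" by simp
  also have "\<dots> = fls_const c * emb q + fls_X_inv * (emb p * emb q)"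
    by (simp add: emb_add emb_smult emb_pCons pCons.IH)
  also have "\<dots> = emb (pCons c p) * emb q"
    by (simp add: emb_pCons algebra_simps)
  finally show ?case .
qed

lemma emb_eq_0_iff [simp]: "emb (p::'a::field poly) = 0 \<longleftrightarrow> p = 0"
proof
  assume "emb p = 0"
  then have "\<And>k. fls_nth (emb p) (- int k) = 0" by simp
  then have "\<And>k. coeff p k = 0" by (simp add: emb_nth)
  then show "p = 0" by (simp add: poly_eq_iff)
qed simp

lemma emb_subdegree: "p \<noteq> 0 \<Longrightarrow> fls_subdegree (emb (p::'a::field poly)) = - int (degree p)"
  by (rule fls_subdegree_eqI) (auto simp: emb_nth coeff_eq_0)



definition conv :: "(nat \<Rightarrow> 'a::field fls) \<Rightarrow> 'a fls \<Rightarrow> bool" where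
  "conv X L \<longleftrightarrow> (\<forall>K::int. eventually (\<lambda>n. X n = L \<or> K < fls_subdegree (X n - L)) sequentially)"

lemma dist_fls_alt:
  fixes a b :: "'a::field fls"
  assumes "a \<noteq> b"
  shows "dist a b = 2 powr (- real_of_int (fls_subdegree (a - b)))"
  using assms by (auto simp: dist_fls_def powr_real_of_int powr_minus)

lemma conv_iff: "conv X L \<longleftrightarrow> (X \<longlonglongrightarrow> (L::'a::field fls))"
proof
  assume c: "conv X L"
  show "X \<longlonglongrightarrow> L"
  proof (rule tendstoI)
    fix e :: real assume e: "e > 0"
    have "\<exists>n. (1/2::real) ^ n < e" by (rule real_arch_pow_inv[OF e]) simp
    then obtain n :: nat where n: "(1/2::real) ^ n < e" by blast
    have "eventually (\<lambda>k. X k = L \<or> int n < fls_subdegree (X k - L)) sequentially"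
      using c unfolding conv_def by blast
    then show "eventually (\<lambda>k. dist (X k) L < e) sequentially"
    proof eventually_elim
      case (elim k)
      show ?case
      proof (cases "X k = L")
        case True then show ?thesis using e by simp
      next
        case False
        then have "int n < fls_subdegree (X k - L)" using elim by simp
        then have "2 powr (- real_of_int (fls_subdegree (X k - L))) < 2 powr (- real n)"
          by (subst powr_less_cancel_iff) linarith+
        also have "\<dots> = (1/2) ^ n" by (simp add: powr_minus powr_realpow power_one_over inverse_eq_divide)
        finally have "2 powr (- real_of_int (fls_subdegree (X k - L))) < e" using n by linarith
        then show ?thesis using dist_fls_alt[OF False] by simp
      qed
    qed
  qed
next
  assume t: "X \<longlonglongrightarrow> L"
  show "conv X L" unfolding conv_def
  proof
    fix K :: int
    have "eventually (\<lambda>k. dist (X k) L < 2 powr (- real_of_int K)) sequentially"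
      using t by (rule tendstoD) simp
    then show "eventually (\<lambda>n. X n = L \<or> K < fls_subdegree (X n - L)) sequentially"
    proof eventually_elim
      case (elim k)
      show ?case
      proof (cases "X k = L")
        case False
        then have "2 powr (- real_of_int (fls_subdegree (X k - L))) < 2 powr (- real_of_int K)"
          using elim by (simp add: dist_fls_alt)
        then have "- real_of_int (fls_subdegree (X k - L)) < - real_of_int K"
          by (subst (asm) powr_less_cancel_iff) linarith+
        then show ?thesis by simp
      qed simp
    qed
  qed
qed

lemma conv_unique: "conv X L1 \<Longrightarrow> conv X L2 \<Longrightarrow> L1 = (L2::'a::field fls)"
  unfolding conv_iff using LIMSEQ_unique by blast

lemma conv_shift: "conv X L \<Longrightarrow> conv (\<lambda>n. X (n + k)) L"
  unfolding conv_iff by (rule LIMSEQ_ignore_initial_segment)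

lemma conv_cong:
  assumes "conv X L" "eventually (\<lambda>n. X n = Y n) sequentially"
  shows "conv Y L"
  unfolding conv_def
proof
  fix K :: int
  have "eventually (\<lambda>n. X n = L \<or> K < fls_subdegree (X n - L)) sequentially"
    using assms(1) unfolding conv_def by blast
  from eventually_conj[OF this assms(2)]
  show "eventually (\<lambda>n. Y n = L \<or> K < fls_subdegree (Y n - L)) sequentially"
    by (rule eventually_mono) auto
qed

lemma conv_diff_const: "conv X L \<Longrightarrow> conv (\<lambda>n. X n - c) (L - c)"
  unfolding conv_def by simp

lemma conv_val:
  fixes L :: "'a::field fls"
  assumes c: "conv X L" and ev: "eventually (\<lambda>n. X n \<noteq> 0 \<and> fls_subdegree (X n) = k) sequentially"
  shows "L \<noteq> 0 \<and> fls_subdegree L = k"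
proof -
  have "eventually (\<lambda>n. X n = L \<or> k < fls_subdegree (X n - L)) sequentially"
    using c unfolding conv_def by blast
  then have "eventually (\<lambda>n. (X n = L \<or> k < fls_subdegree (X n - L)) \<and> (X n \<noteq> 0 \<and> fls_subdegree (X n) = k)) sequentially"
    using ev by (rule eventually_conj)
  then obtain N where "\<forall>n\<ge>N. (X n = L \<or> k < fls_subdegree (X n - L)) \<and> (X n \<noteq> 0 \<and> fls_subdegree (X n) = k)"
    unfolding eventually_sequentially by blast
  then obtain n where n: "X n = L \<or> k < fls_subdegree (X n - L)" "X n \<noteq> 0" "fls_subdegree (X n) = k"
    by blast
  show ?thesis
  proof (cases "X n = L")
    case True then show ?thesis using n by simp
  next
    case False
    then have lt: "fls_subdegree (X n) < fls_subdegree (X n - L)" using n by simp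
    have eq: "L = X n - (X n - L)" by simp
    have "fls_subdegree L = k" using fls_subdegree_diff_eq1[OF n(2) lt] eq n(3) by simp
    moreover have "L \<noteq> 0" using lt n(3) by auto
    ultimately show ?thesis by simp
  qed
qed

lemma conv_inverse:
  fixes L :: "'a::field fls"
  assumes c: "conv X L" and L: "L \<noteq> 0"
  shows "conv (\<lambda>n. inverse (X n)) (inverse L)"
  unfolding conv_def
proof
  fix K :: int
  let ?k = "fls_subdegree L"
  have "eventually (\<lambda>n. X n = L \<or> max ?k (K + 2 * ?k) < fls_subdegree (X n - L)) sequentially"
    using c unfolding conv_def by blast
  then show "eventually (\<lambda>n. inverse (X n) = inverse L \<or> K < fls_subdegree (inverse (X n) - inverse L)) sequentially"
  proof eventually_elim
    case (elim n)
    show ?case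
    proof (cases "X n = L")
      case False
      then have d: "X n - L \<noteq> 0" by simp
      have lt: "?k < fls_subdegree (X n - L)" "K + 2 * ?k < fls_subdegree (X n - L)" using elim False by auto
      have xn: "X n = L + (X n - L)" by simp
      have "fls_subdegree (L + (X n - L)) = ?k" by (rule fls_subdegree_add_eq1[OF L lt(1)])
      then have vx: "fls_subdegree (X n) = ?k" by simp
      have x0: "X n \<noteq> 0"
      proof
        assume "X n = 0"
        then have "fls_subdegree (X n - L) = ?k" by simp
        with lt(1) show False by simp
      qed
      have eq: "inverse (X n) - inverse L = - ((X n - L) * (inverse (X n) * inverse L))"
        using inverse_diff_inverse[OF x0 L] by (simp add: ac_simps)
      show ?thesis
      proof (cases "inverse (X n) = inverse L")
        case False
        have "fls_subdegree (inverse (X n) - inverse L) = fls_subdegree (X n - L) - ?k - ?k"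
          unfolding eq fls_uminus_subdegree using d x0 L vx by (simp add: fls_subdegree_mult)
        then show ?thesis using lt by simp
      qed simp
    qed simp
  qed
qed



definition quad :: "'a::field fls \<Rightarrow> 'a fls \<Rightarrow> bool" where
  "quad x x' \<longleftrightarrow> (\<exists>A B D. A \<noteq> 0 \<and> emb B = - emb A * (x + x') \<and> emb D = emb A * x * x')"

lemma L1_alg:
  fixes a b d c x x' :: "'b::field"
  assumes u: "x - c \<noteq> 0" and v: "x' - c \<noteq> 0" and b: "b = - a * (x + x')" and d: "d = a * x * x'"
  shows "a*c*c + b*c + d = a*(x-c)*(x'-c)"
    and "b + a*c + a*c = - (a*(x-c)*(x'-c)) * (inverse (x-c) + inverse (x'-c))"
    and "a = a*(x-c)*(x'-c) * inverse (x-c) * inverse (x'-c)"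
proof -
  show "a*c*c + b*c + d = a*(x-c)*(x'-c)" unfolding b d by (simp add: algebra_simps)
  have h1: "a*(x-c)*(x'-c)*inverse (x-c) = a*(x'-c)" using u by (simp add: field_simps)
  have h2: "a*(x-c)*(x'-c)*inverse (x'-c) = a*(x-c)" using v by (simp add: field_simps)
  have "- (a*(x-c)*(x'-c)) * (inverse (x-c) + inverse (x'-c)) =
     - (a*(x-c)*(x'-c)*inverse (x-c) + a*(x-c)*(x'-c)*inverse (x'-c))"
    by (metis distrib_left mult_minus_left)
  also have "\<dots> = - a * ((x'-c) + (x-c))" unfolding h1 h2 by (simp add: algebra_simps)
  finally have "- (a*(x-c)*(x'-c)) * (inverse (x-c) + inverse (x'-c)) = - a * ((x'-c) + (x-c))" .
  then show "b + a*c + a*c = - (a*(x-c)*(x'-c)) * (inverse (x-c) + inverse (x'-c))"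
    unfolding b by (simp add: algebra_simps)
  have "a*(x-c)*(x'-c) * inverse (x-c) * inverse (x'-c) = a*(x'-c) * inverse (x'-c)"
    by (simp only: h1)
  also have "\<dots> = a" using v by simp
  finally show "a = a*(x-c)*(x'-c) * inverse (x-c) * inverse (x'-c)" by simp
qed

lemma quad_fwd:
  fixes x x' :: "'a::field fls"
  assumes q: "quad x x'" and xc: "x \<noteq> emb C" and xc': "x' \<noteq> emb C"
  shows "quad (inverse (x - emb C)) (inverse (x' - emb C))"
proof -
  obtain A B D where A: "A \<noteq> 0" and B: "emb B = - emb A * (x + x')" and D: "emb D = emb A * x * x'"
    using q unfolding quad_def by blast
  have u: "x - emb C \<noteq> 0" and v: "x' - emb C \<noteq> 0" using xc xc' by auto
  note alg = L1_alg[OF u v B D]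
  let ?A2 = "A*C*C + B*C + D" and ?A1 = "B + A*C + A*C"
  have eA2: "emb ?A2 = emb A*(x-emb C)*(x'-emb C)" using alg(1) by (simp add: emb_add emb_mult)
  have "emb ?A2 \<noteq> 0" unfolding eA2 using A u v by simp
  then have A2: "?A2 \<noteq> 0" by (metis emb_0)
  have eA1: "emb ?A1 = - emb ?A2 * (inverse (x - emb C) + inverse (x' - emb C))"
    unfolding eA2 unfolding emb_add emb_mult by (rule alg(2))
  have eA0: "emb A = emb ?A2 * inverse (x - emb C) * inverse (x' - emb C)"
    using alg(3) unfolding eA2 by simp
  show ?thesis unfolding quad_def using A2 eA1 eA0 by blast
qed

lemma quad_bwd:
  fixes y y' :: "'a::field fls"
  assumes q: "quad y y'" and y: "y \<noteq> 0" and y': "y' \<noteq> 0"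
  shows "quad (emb C + inverse y) (emb C + inverse y')"
proof -
  obtain A B D where A: "A \<noteq> 0" and B: "emb B = - emb A * (y + y')" and D: "emb D = emb A * y * y'"
    using q unfolding quad_def by blast
  have "emb D \<noteq> 0" unfolding D using A y y' by simp
  then have D0: "D \<noteq> 0" by (metis emb_0)
  have e1: "emb (B - C*D - C*D) = - emb D * ((emb C + inverse y) + (emb C + inverse y'))"
    unfolding emb_diff emb_mult B D using y y' by (simp add: field_simps)
  have e2: "emb (C*C*D - C*B + A) = emb D * (emb C + inverse y) * (emb C + inverse y')"
    unfolding emb_diff emb_add emb_mult B D using y y' by (simp add: field_simps)
  show ?thesis unfolding quad_def using D0 e1 e2 by blast
qed

lemma quad_unique:
  fixes x x1 x2 :: "'a::field fls"
  assumes irr: "x \<notin> {emb P / emb Q | P Q. Q \<noteq> 0}"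
    and q1: "quad x x1" and q2: "quad x x2"
  shows "x1 = x2"
proof -
  obtain A1 B1 D1 where A1: "A1 \<noteq> 0" and B1: "emb B1 = - emb A1 * (x + x1)" and D1: "emb D1 = emb A1 * x * x1"
    using q1 unfolding quad_def by blast
  obtain A2 B2 D2 where A2: "A2 \<noteq> 0" and B2: "emb B2 = - emb A2 * (x + x2)" and D2: "emb D2 = emb A2 * x * x2"
    using q2 unfolding quad_def by blast
  let ?W = "A2*B1 - A1*B2" and ?Z = "A2*D1 - A1*D2"
  have lin: "emb ?W * x + emb ?Z = 0"
    unfolding emb_diff emb_mult B1 B2 D1 D2 by (simp add: algebra_simps)
  have W: "?W = 0"
  proof (rule ccontr)
    assume W0: "?W \<noteq> 0"
    then have "emb ?W \<noteq> 0" by simp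
    note nz = this
    have e: "emb ?W * x = - emb ?Z" using lin by (simp add: eq_neg_iff_add_eq_0)
    have "x = (emb ?W * x) / emb ?W" using nz by simp
    also have "\<dots> = emb (- ?Z) / emb ?W" by (simp only: e emb_minus)
    finally have "x = emb (- ?Z) / emb ?W" .
    with W0 irr show False by blast
  qed
  have "emb A1 * emb A2 * (x2 - x1) = 0"
    using arg_cong[OF W, of emb] unfolding emb_diff emb_mult B1 B2 by (simp add: algebra_simps)
  then show ?thesis using A1 A2 by simp
qed

lemma mobius_step:
  fixes p p' q q' y z c :: "'b::field"
  assumes z: "z \<noteq> 0" and y: "y = c + inverse z"
  shows "(p*y + p')/(q*y + q') = ((p*c+p')*z + p)/((q*c+q')*z + q)"
proof -
  have 1: "p*y + p' = ((p*c+p')*z + p) / z" using z unfolding y by (simp add: field_simps)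
  have 2: "q*y + q' = ((q*c+q')*z + q) / z" using z unfolding y by (simp add: field_simps)
  show ?thesis unfolding 1 2 using z by (cases "(q*c+q')*z + q = 0") simp_all
qed



lemma upt_shift: "[m+k..<n+k] = map (\<lambda>i. i + k) [m..<n]"
  by (induct n) auto

lemma add_val:
  fixes f g :: "'a::field fls"
  assumes "f \<noteq> 0" "fls_subdegree f < fls_subdegree g"
  shows "f + g \<noteq> 0 \<and> fls_subdegree (f + g) = fls_subdegree f"
proof
  show v: "fls_subdegree (f + g) = fls_subdegree f" by (rule fls_subdegree_add_eq1[OF assms])
  show "f + g \<noteq> 0"
  proof
    assume "f + g = 0"
    then have "g = - f" by (simp add: add_eq_0_iff2)
    then show False using assms(2) by simp
  qed
qed

primrec alph :: "(nat \<Rightarrow> 'a::field fls) \<Rightarrow> 'a fls \<Rightarrow> nat \<Rightarrow> 'a fls" where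
  "alph C x 0 = x"
| "alph C x (Suc m) = inverse (alph C x m - C m)"

locale cfsetup =
  fixes a b :: "nat \<Rightarrow> ('q::{field,finite}) poly" and r s :: nat and \<alpha> :: "'q fls"
  assumes r1: "r \<ge> 1" and s1: "s \<ge> 1"
    and dega: "\<And>i. 1 \<le> i \<Longrightarrow> i \<le> r \<Longrightarrow> degree (a i) \<ge> 1"
    and degb: "\<And>j. 1 \<le> j \<Longrightarrow> j \<le> s \<Longrightarrow> degree (b j) \<ge> 1"
    and lim: "cf_convergent (eperiodic_pq a r b s) \<longlonglongrightarrow> \<alpha>"
begin

definition c :: "nat \<Rightarrow> 'q poly" where "c = eperiodic_pq a r b s"

definition T :: "nat \<Rightarrow> nat \<Rightarrow> 'q fls" where
  "T m n = cf_list (map (\<lambda>i. emb (c i)) [m..<Suc n])"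

definition A :: "nat \<Rightarrow> 'q fls" where "A = alph (\<lambda>i. emb (c i)) \<alpha>"

lemma c_low: "m \<le> r \<Longrightarrow> c m = a m"
  by (simp add: c_def eperiodic_pq_def)

lemma c_deg: "1 \<le> m \<Longrightarrow> degree (c m) \<ge> 1"
proof (cases "m \<le> r")
  case True
  assume "1 \<le> m" then show ?thesis using True dega by (simp add: c_low)
next
  case False
  have "1 \<le> (m - r - 1) mod s + 1" "(m - r - 1) mod s + 1 \<le> s"
    using s1 by (simp_all add: Suc_leI)
  then show ?thesis using False degb by (simp add: c_def eperiodic_pq_def)
qed

lemma c_nz: "1 \<le> m \<Longrightarrow> c m \<noteq> 0"
  using c_deg by force

lemma c_per: "r + 1 \<le> m \<Longrightarrow> c (m + s) = c m"
proof -
  assume m: "r + 1 \<le> m"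
  then have "m + s - Suc r = (m - Suc r) + s" by simp
  then have "(m + s - Suc r) mod s = (m - Suc r) mod s" by simp
  then show ?thesis using m by (simp add: c_def eperiodic_pq_def)
qed

lemma c_rs: "c (r + s) = b s"
proof -
  have "(r + s - r - 1) mod s + 1 = s" using s1 by simp
  then show ?thesis using s1 by (simp add: c_def eperiodic_pq_def)
qed

lemma c_r1: "c (r + 1) = b 1"
  using s1 by (simp add: c_def eperiodic_pq_def)

lemma T_last: "T n n = emb (c n)"
  by (simp add: T_def)

lemma T_rec: "m < n \<Longrightarrow> T m n = emb (c m) + inverse (T (Suc m) n)"
proof -
  assume mn: "m < n"
  have 1: "[m..<Suc n] = m # Suc m # [Suc (Suc m)..<Suc n]" using mn by (simp add: upt_conv_Cons)
  have 2: "[Suc m..<Suc n] = Suc m # [Suc (Suc m)..<Suc n]" using mn by (simp add: upt_conv_Cons)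
  show ?thesis unfolding T_def 1 2 by simp
qed

lemma emb_c_val: "1 \<le> m \<Longrightarrow> emb (c m) \<noteq> 0 \<and> fls_subdegree (emb (c m)) = - int (degree (c m))"
  using c_nz by (simp add: emb_subdegree)

lemma T_val: "1 \<le> m \<Longrightarrow> m \<le> n \<Longrightarrow> T m n \<noteq> 0 \<and> fls_subdegree (T m n) = - int (degree (c m))"
proof -
  assume m1: "1 \<le> m" and mn: "m \<le> n"
  have "1 \<le> m \<longrightarrow> T m n \<noteq> 0 \<and> fls_subdegree (T m n) = - int (degree (c m))"
    using mn
  proof (induction m rule: inc_induct)
    case base
    show ?case using emb_c_val by (simp add: T_last)
  next
    case (step k)
    show ?case
    proof
      assume k1: "1 \<le> k"
      have IH: "T (Suc k) n \<noteq> 0 \<and> fls_subdegree (T (Suc k) n) = - int (degree (c (Suc k)))"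
        using step.IH by simp
      have d1: "degree (c (Suc k)) \<ge> 1" "degree (c k) \<ge> 1" using c_deg k1 by auto
      have lt: "fls_subdegree (emb (c k)) < fls_subdegree (inverse (T (Suc k) n))"
        using IH d1 emb_c_val[OF k1] by simp
      show "T k n \<noteq> 0 \<and> fls_subdegree (T k n) = - int (degree (c k))"
        using add_val[OF conjunct1[OF emb_c_val[OF k1]] lt] T_rec[OF step.hyps(2)] emb_c_val[OF k1] by simp
    qed
  qed
  then show ?thesis using m1 by simp
qed

lemma A_conv: "conv (T m) (A m) \<and> (1 \<le> m \<longrightarrow> A m \<noteq> 0 \<and> fls_subdegree (A m) = - int (degree (c m)))"
proof (induction m)
  case 0
  have "T 0 = cf_convergent (eperiodic_pq a r b s)"
    by (simp add: fun_eq_iff T_def cf_convergent_def c_def)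
  then show ?case using lim by (simp add: conv_iff A_def)
next
  case (Suc m)
  have cm: "conv (T m) (A m)" using Suc.IH by simp
  let ?Y = "\<lambda>n. T m n - emb (c m)"
  have cY: "conv ?Y (A m - emb (c m))" using conv_diff_const[OF cm] .
  have Yeq: "?Y n = inverse (T (Suc m) n)" if "Suc m \<le> n" for n
    using T_rec[of m n] that by simp
  have "eventually (\<lambda>n. ?Y n \<noteq> 0 \<and> fls_subdegree (?Y n) = int (degree (c (Suc m)))) sequentially"
    unfolding eventually_sequentially
  proof (intro exI allI impI)
    fix n assume "Suc m \<le> n"
    then show "?Y n \<noteq> 0 \<and> fls_subdegree (?Y n) = int (degree (c (Suc m)))"
      using Yeq T_val[of "Suc m" n] by simp
  qed
  from conv_val[OF cY this] have nz: "A m - emb (c m) \<noteq> 0"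
    and v: "fls_subdegree (A m - emb (c m)) = int (degree (c (Suc m)))" by auto
  have AS: "A (Suc m) = inverse (A m - emb (c m))" by (simp add: A_def)
  have c1: "conv (\<lambda>n. inverse (?Y n)) (A (Suc m))" unfolding AS by (rule conv_inverse[OF cY nz])
  have "eventually (\<lambda>n. inverse (?Y n) = T (Suc m) n) sequentially"
    unfolding eventually_sequentially
  proof (intro exI allI impI)
    fix n assume "Suc m \<le> n"
    then show "inverse (?Y n) = T (Suc m) n" using Yeq by simp
  qed
  from conv_cong[OF c1 this] have "conv (T (Suc m)) (A (Suc m))" .
  moreover have "A (Suc m) \<noteq> 0" using nz AS by simp
  moreover have "fls_subdegree (A (Suc m)) = - int (degree (c (Suc m)))" using v AS by simp
  ultimately show ?case by simp
qed

lemma A_nz: "1 \<le> m \<Longrightarrow> A m \<noteq> 0"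
  using A_conv by blast

lemma A_val: "1 \<le> m \<Longrightarrow> fls_subdegree (A m) = - int (degree (c m))"
  using A_conv by blast

lemma A_Suc: "A (Suc m) = inverse (A m - emb (c m))"
  by (simp add: A_def)

lemma A_rec: "A m = emb (c m) + inverse (A (Suc m))"
  by (simp add: A_Suc)

lemma T_shift: "r + 1 \<le> m \<Longrightarrow> T (m + s) (n + s) = T m n"
proof -
  assume m: "r + 1 \<le> m"
  have "[m + s..<Suc n + s] = map (\<lambda>i. i + s) [m..<Suc n]" by (rule upt_shift)
  then have "map (\<lambda>i. emb (c i)) [m + s..<Suc (n + s)] = map (\<lambda>i. emb (c (i + s))) [m..<Suc n]"
    by simp
  also have "\<dots> = map (\<lambda>i. emb (c i)) [m..<Suc n]"
    using m by (intro map_cong) (auto simp: c_per)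
  finally show ?thesis by (simp add: T_def)
qed

lemma A_per: "A (r + 1 + s) = A (r + 1)"
proof -
  have "conv (\<lambda>n. T (r + 1 + s) (n + s)) (A (r + 1 + s))"
    using A_conv[of "r+1+s"] conv_shift by blast
  moreover have "(\<lambda>n. T (r + 1 + s) (n + s)) = T (r + 1)"
    using T_shift[of "r+1"] by auto
  ultimately show ?thesis using A_conv[of "r+1"] conv_unique by metis
qed

end


lemma quad_galois:
  fixes x x' :: "'a::field fls"
  assumes irr: "x \<notin> {emb P / emb Q | P Q. Q \<noteq> 0}" and q: "quad x x'"
  shows "galois_conj x = x'"
proof -
  let ?P = "\<lambda>\<beta>. \<exists>A B C. A \<noteq> 0 \<and> x \<notin> {emb P / emb Q | P Q. Q \<noteq> 0} \<and>
      emb A * x\<^sup>2 + emb B * x + emb C = 0 \<and> \<beta> = - emb B / emb A - x"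
  obtain A B D where A: "A \<noteq> 0" and B: "emb B = - emb A * (x + x')" and D: "emb D = emb A * x * x'"
    using q unfolding quad_def by blast
  have "?P x'"
  proof (intro exI conjI)
    show "A \<noteq> 0" "x \<notin> {emb P / emb Q | P Q. Q \<noteq> 0}" by fact+
    show "emb A * x\<^sup>2 + emb B * x + emb D = 0" unfolding B D by (simp add: algebra_simps power2_eq_square)
    show "x' = - emb B / emb A - x" unfolding B using A by simp
  qed
  moreover have "\<beta> = x'" if Pb: "?P \<beta>" for \<beta>
  proof -
    obtain A2 B2 C2 where A2: "A2 \<noteq> 0" and eq: "emb A2 * x\<^sup>2 + emb B2 * x + emb C2 = 0"
      and be: "\<beta> = - emb B2 / emb A2 - x" using Pb by blast
    have eA2: "emb A2 \<noteq> 0" using A2 by simp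
    have B2: "emb B2 = - emb A2 * (x + \<beta>)" unfolding be using eA2 by (simp add: field_simps)
    have C2: "emb C2 = emb A2 * x * \<beta>"
    proof -
      have "emb C2 = - emb A2 * x\<^sup>2 - emb B2 * x" using eq by (simp add: algebra_simps eq_neg_iff_add_eq_0)
      also have "\<dots> = emb A2 * x * \<beta>" unfolding B2 by (simp add: algebra_simps power2_eq_square)
      finally show ?thesis .
    qed
    have "quad x \<beta>" unfolding quad_def using A2 B2 C2 by blast
    then show ?thesis using quad_unique[OF irr _ q] by blast
  qed
  ultimately show ?thesis unfolding galois_conj_def by (rule some_equality)
qed

context cfsetup
begin

lemma A_irr: "A m \<notin> {emb P / emb Q | P Q. Q \<noteq> 0}"
proof
  assume "A m \<in> {emb P / emb Q | P Q. Q \<noteq> 0}"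
  then obtain U0 V0 where V0: "V0 \<noteq> 0" and e0: "A m = emb U0 / emb V0" by blast
  have claim: "\<exists>U V. V \<noteq> 0 \<and> A (m + n) = emb U / emb V \<and> degree V + n \<le> degree V0" for n
  proof (induction n)
    case 0
    then show ?case using V0 e0 by auto
  next
    case (Suc n)
    then obtain U V where V: "V \<noteq> 0" and e: "A (m + n) = emb U / emb V"
      and d: "degree V + n \<le> degree V0" by blast
    let ?j = "m + n"
    let ?V' = "U - c ?j * V"
    have eV: "emb V \<noteq> 0" using V by simp
    have diff: "A ?j - emb (c ?j) = emb ?V' / emb V"
      unfolding e emb_diff emb_mult using eV by (simp add: field_simps)
    have AS: "A (Suc ?j) = emb V / emb ?V'" using A_Suc[of ?j] unfolding diff by simp
    have nzS: "A (Suc ?j) \<noteq> 0" using A_nz by simp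
    have V': "?V' \<noteq> 0"
    proof
      assume "?V' = 0"
      then have "A (Suc ?j) = 0" unfolding AS by simp
      with nzS show False by simp
    qed
    have "fls_subdegree (A (Suc ?j)) = - int (degree V) + int (degree ?V')"
      unfolding AS using V V' by (simp add: fls_divide_subdegree emb_subdegree)
    moreover have "fls_subdegree (A (Suc ?j)) = - int (degree (c (Suc ?j)))" using A_val by simp
    moreover have "degree (c (Suc ?j)) \<ge> 1" using c_deg by simp
    ultimately have "degree ?V' < degree V" by linarith
    then have "degree ?V' + Suc n \<le> degree V0" using d by simp
    moreover have "A (m + Suc n) = emb V / emb ?V'" using AS by simp
    ultimately show ?case using V' by blast
  qed
  from claim[of "Suc (degree V0)"] show False by auto
qed

definition d1 where "d1 = degree (c (r + 1))"

lemma mobius: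
  "\<exists>P P' Q Q'. A (r + 1) = (emb P * A (r + 1 + Suc k) + emb P') / (emb Q * A (r + 1 + Suc k) + emb Q')
     \<and> P \<noteq> 0 \<and> Q \<noteq> 0 \<and> P' \<noteq> 0 \<and> degree P = degree Q + d1 \<and> degree P' \<le> degree P
     \<and> degree Q' \<le> degree Q \<and> degree Q + d1 = degree P' + degree (c (r + Suc k))"
proof (induction k)
  case 0
  let ?y = "A (r + 1 + Suc 0)"
  have y: "?y \<noteq> 0" using A_nz by simp
  have "A (r + 1) = emb (c (r+1)) + inverse ?y" using A_rec[of "r+1"] by simp
  also have "\<dots> = (emb (c (r+1)) * ?y + emb 1) / (emb 1 * ?y + emb 0)"
    using y by (simp add: field_simps)
  finally have eq: "A (r + 1) = (emb (c (r+1)) * ?y + emb 1) / (emb 1 * ?y + emb 0)" .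
  have "c (r+1) \<noteq> 0" using c_nz by simp
  then show ?case using eq by (intro exI[of _ "c (r+1)"] exI[of _ 1] exI[of _ 1] exI[of _ 0]) (simp add: d1_def)
next
  case (Suc k)
  then obtain P P' Q Q' where eq: "A (r + 1) = (emb P * A (r + 1 + Suc k) + emb P') / (emb Q * A (r + 1 + Suc k) + emb Q')"
    and nz: "P \<noteq> 0" "Q \<noteq> 0" "P' \<noteq> 0" and dg: "degree P = degree Q + d1" "degree P' \<le> degree P"
    "degree Q' \<le> degree Q" "degree Q + d1 = degree P' + degree (c (r + Suc k))" by blast
  let ?C = "c (r + 1 + Suc k)"
  let ?y = "A (r + 1 + Suc k)" and ?z = "A (r + 1 + Suc (Suc k))"
  have z: "?z \<noteq> 0" using A_nz by simp
  have y: "?y = emb ?C + inverse ?z" using A_rec[of "r + 1 + Suc k"] by simp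
  have Cnz: "?C \<noteq> 0" and dC: "degree ?C \<ge> 1" using c_nz c_deg by auto
  have eq2: "A (r + 1) = (emb (P * ?C + P') * ?z + emb P) / (emb (Q * ?C + Q') * ?z + emb Q)"
    unfolding eq mobius_step[OF z y] emb_add emb_mult ..
  have dPC: "degree (P * ?C) = degree P + degree ?C" by (rule degree_mult_eq[OF nz(1) Cnz])
  have dQC: "degree (Q * ?C) = degree Q + degree ?C" by (rule degree_mult_eq[OF nz(2) Cnz])
  have dP2: "degree (P * ?C + P') = degree P + degree ?C"
    using dPC dg dC by (subst degree_add_eq_left) auto
  have dQ2: "degree (Q * ?C + Q') = degree Q + degree ?C"
    using dQC dg dC by (subst degree_add_eq_left) auto
  have nP2: "P * ?C + P' \<noteq> 0" using dP2 dC by auto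
  have nQ2: "Q * ?C + Q' \<noteq> 0" using dQ2 dC by auto
  have rk: "r + Suc (Suc k) = r + 1 + Suc k" by simp
  show ?case
    apply (rule exI[of _ "P * ?C + P'"], rule exI[of _ P], rule exI[of _ "Q * ?C + Q'"], rule exI[of _ Q])
    using eq2 nP2 nQ2 nz dP2 dQ2 dg by (simp add: rk)
qed

end


primrec bk :: "(nat \<Rightarrow> 'a::field fls) \<Rightarrow> 'a fls \<Rightarrow> nat \<Rightarrow> 'a fls" where
  "bk C x 0 = x"
| "bk C x (Suc k) = C k + inverse (bk C x k)"

context cfsetup
begin

lemma main:
  assumes neq: "a r \<noteq> b s"
  shows "inverse (fls_absv (\<alpha> - galois_conj \<alpha>)) =
           real CARD('q) powi
             (2 * (\<Sum>i=1..r. int (degree (a i))) - int (degree (a r)) - int (degree (b s))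
              + int (degree (a r - b s)))"
proof -
  define \<beta> where "\<beta> = A (r + 1)"
  have sS: "Suc (s - 1) = s" using s1 by simp
  obtain P P' Q Q' where eq0: "A (r + 1) = (emb P * A (r + 1 + s) + emb P') / (emb Q * A (r + 1 + s) + emb Q')"
    and nz: "P \<noteq> 0" "Q \<noteq> 0" "P' \<noteq> 0" and dg: "degree P = degree Q + d1" "degree P' \<le> degree P"
    "degree Q' \<le> degree Q" "degree Q + d1 = degree P' + degree (c (r + s))"
    using mobius[of "s - 1"] unfolding sS by blast
  have eqb: "\<beta> = (emb P * \<beta> + emb P') / (emb Q * \<beta> + emb Q')"
    using eq0 A_per unfolding \<beta>_def by simp
  have bnz: "\<beta> \<noteq> 0" unfolding \<beta>_def using A_nz by simp
  have vb: "fls_subdegree \<beta> = - int d1" unfolding \<beta>_def d1_def using A_val by simp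
  have den: "emb Q * \<beta> + emb Q' \<noteq> 0"
  proof
    assume "emb Q * \<beta> + emb Q' = 0"
    then have "\<beta> = 0" using eqb by simp
    with bnz show False by simp
  qed
  have key: "\<beta> * (emb Q * \<beta> + emb Q') = emb P * \<beta> + emb P'"
    using eqb den by (simp add: eq_divide_eq)
  have eQ: "emb Q \<noteq> 0" using nz by simp
  define \<beta>' where "\<beta>' = - emb (Q' - P) / emb Q - \<beta>"
  have eQb': "emb Q * \<beta>' = - emb (Q' - P) - emb Q * \<beta>"
    unfolding \<beta>'_def using eQ by (simp add: field_simps)
  have B: "emb (Q' - P) = - emb Q * (\<beta> + \<beta>')"
    using eQb' by (simp add: algebra_simps)
  have D: "emb (- P') = emb Q * \<beta> * \<beta>'"
  proof -
    have "emb Q * \<beta> * \<beta>' = \<beta> * (emb Q * \<beta>')" by (simp add: ac_simps)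
    also have "\<dots> = - (\<beta> * (emb Q * \<beta> + emb Q')) + emb P * \<beta>"
      unfolding eQb' emb_diff by (simp add: algebra_simps)
    also have "\<dots> = - emb P'" unfolding key by simp
    finally show ?thesis by (simp add: emb_minus)
  qed
  have qb: "quad \<beta> \<beta>'" unfolding quad_def using nz(2) B D by blast
  have b'eq: "\<beta>' = - emb P' / (emb Q * \<beta>)"
    using D eQ bnz by (simp add: emb_minus field_simps)
  have dbs: "degree (b s) \<ge> 1" using degb s1 by simp
  have b'nz: "\<beta>' \<noteq> 0" unfolding b'eq using nz eQ bnz by simp
  have vb': "fls_subdegree \<beta>' = int (degree (b s))"
  proof -
    have "fls_subdegree \<beta>' = fls_subdegree (emb P') - (fls_subdegree (emb Q) + fls_subdegree \<beta>)"
      unfolding b'eq using nz eQ bnz by (simp add: fls_divide_subdegree)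
    also have "\<dots> = - int (degree P') + int (degree Q) + int d1"
      using nz vb by (simp add: emb_subdegree)
    also have "\<dots> = int (degree (b s))" using dg(4) c_rs by simp
    finally show ?thesis .
  qed

  define g where "g = alph (\<lambda>j. emb (c (r + 1 + j))) \<beta>'"
  have fw: "quad (A (r + 1 + j)) (g j) \<and> g j \<noteq> 0 \<and> 0 < fls_subdegree (g j)" for j
  proof (induction j)
    case 0
    then show ?case using qb b'nz vb' dbs unfolding g_def \<beta>_def by simp
  next
    case (Suc j)
    let ?C = "c (r + 1 + j)"
    have IH: "quad (A (r + 1 + j)) (g j)" "g j \<noteq> 0" "0 < fls_subdegree (g j)" using Suc.IH by auto
    have Cv: "emb ?C \<noteq> 0" "fls_subdegree (emb ?C) = - int (degree ?C)" "degree ?C \<ge> 1"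
      using emb_c_val[of "r + 1 + j"] c_deg[of "r + 1 + j"] by auto
    have AS: "A (Suc (r + 1 + j)) = inverse (A (r + 1 + j) - emb ?C)" by (rule A_Suc)
    have x1: "A (r + 1 + j) \<noteq> emb ?C"
    proof
      assume "A (r + 1 + j) = emb ?C"
      then have "A (Suc (r + 1 + j)) = 0" unfolding AS by simp
      with A_nz[of "Suc (r + 1 + j)"] show False by simp
    qed
    have lt: "fls_subdegree (- emb ?C) < fls_subdegree (g j)" using Cv IH by simp
    from add_val[OF _ lt] Cv(1) have gd: "- emb ?C + g j \<noteq> 0" "fls_subdegree (- emb ?C + g j) = - int (degree ?C)"
      using Cv by auto
    have x2: "g j \<noteq> emb ?C" using gd(1) by auto
    have gS: "g (Suc j) = inverse (g j - emb ?C)" unfolding g_def by simp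
    have "quad (A (Suc (r + 1 + j))) (g (Suc j))"
      unfolding AS gS by (rule quad_fwd[OF IH(1) x1 x2])
    moreover have "g (Suc j) \<noteq> 0" unfolding gS using gd(1) by (simp add: add.commute)
    moreover have "fls_subdegree (g (Suc j)) = int (degree ?C)" unfolding gS using gd(2)
      by (simp add: add.commute)
    ultimately show ?case using Cv(3) by simp
  qed
  define \<epsilon> where "\<epsilon> = g (s - 1)"
  have enz: "\<epsilon> \<noteq> 0" and ev: "0 < fls_subdegree \<epsilon>" unfolding \<epsilon>_def using fw by auto
  have "quad \<beta> (g s)" using fw[of s] A_per unfolding \<beta>_def by simp
  then have gs: "g s = \<beta>'" using quad_unique[OF _ _ qb] A_irr unfolding \<beta>_def by blast
  have "g s = inverse (\<epsilon> - emb (b s))"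
  proof -
    have "g (Suc (s - 1)) = inverse (g (s - 1) - emb (c (r + 1 + (s - 1))))" unfolding g_def by simp
    moreover have "r + 1 + (s - 1) = r + s" using s1 by simp
    ultimately show ?thesis unfolding \<epsilon>_def sS c_rs[symmetric] by simp
  qed
  then have ib': "inverse \<beta>' = \<epsilon> - emb (b s)" using gs by simp

  define \<Gamma> where "\<Gamma> m = bk (\<lambda>k. emb (c (r - k))) \<beta>' (r + 1 - m)" for m
  have Gtop: "\<Gamma> (r + 1) = \<beta>'" unfolding \<Gamma>_def by simp
  have Grec: "\<Gamma> m = emb (c m) + inverse (\<Gamma> (Suc m))" if "m \<le> r" for m
  proof -
    have "r + 1 - m = Suc (r - m)" using that by simp
    moreover have "r - (r - m) = m" using that by simp
    moreover have "r + 1 - Suc m = r - m" by simp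
    ultimately show ?thesis unfolding \<Gamma>_def by simp
  qed
  have Gr: "\<Gamma> r = emb (a r - b s) + \<epsilon>"
    using Grec[of r] Gtop ib' c_low[of r] by (simp add: emb_diff)
  have abz: "a r - b s \<noteq> 0" using neq by simp
  have vGr: "\<Gamma> r \<noteq> 0 \<and> fls_subdegree (\<Gamma> r) = - int (degree (a r - b s))"
  proof -
    have lt: "fls_subdegree (emb (a r - b s)) < fls_subdegree \<epsilon>" using ev abz by (simp add: emb_subdegree)
    show ?thesis using add_val[OF _ lt] abz unfolding Gr by (simp add: emb_subdegree)
  qed
  have Gval: "1 \<le> m \<longrightarrow> \<Gamma> m \<noteq> 0 \<and> fls_subdegree (\<Gamma> m) \<le> 0 \<and> (m < r \<longrightarrow> fls_subdegree (\<Gamma> m) = - int (degree (a m)))"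
    if "m \<le> r" for m
    using that
  proof (induction m rule: inc_induct)
    case base
    then show ?case using vGr by simp
  next
    case (step k)
    show ?case
    proof
      assume k1: "1 \<le> k"
      have IH: "\<Gamma> (Suc k) \<noteq> 0" "fls_subdegree (\<Gamma> (Suc k)) \<le> 0" using step.IH by auto
      have ca: "c k = a k" using step.hyps c_low by simp
      have dk: "degree (a k) \<ge> 1" using dega k1 step.hyps by simp
      have akz: "a k \<noteq> 0" using dk by auto
      have ak: "emb (a k) \<noteq> 0" "fls_subdegree (emb (a k)) = - int (degree (a k))"
        using akz emb_subdegree[OF akz] by auto
      have lt: "fls_subdegree (emb (a k)) < fls_subdegree (inverse (\<Gamma> (Suc k)))"
        using ak dk IH by simp
      have "\<Gamma> k = emb (a k) + inverse (\<Gamma> (Suc k))" using Grec[of k] step.hyps ca by simp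
      then show "\<Gamma> k \<noteq> 0 \<and> fls_subdegree (\<Gamma> k) \<le> 0 \<and> (k < r \<longrightarrow> fls_subdegree (\<Gamma> k) = - int (degree (a k)))"
        using add_val[OF ak(1) lt] ak by simp
    qed
  qed
  have Gnz: "\<Gamma> m \<noteq> 0" if "1 \<le> m" "m \<le> r + 1" for m
  proof (cases "m = r + 1")
    case True then show ?thesis using Gtop b'nz by simp
  next
    case False then show ?thesis using Gval[of m] that by simp
  qed
  have Aeq: "A m = emb (c m) + inverse (A (Suc m))" for m by (rule A_rec)
  have qG: "quad (A m) (\<Gamma> m)" if "m \<le> r + 1" for m
    using that
  proof (induction m rule: inc_induct)
    case base
    then show ?case using qb Gtop unfolding \<beta>_def by simp
  next
    case (step k)
    have "quad (emb (c k) + inverse (A (Suc k))) (emb (c k) + inverse (\<Gamma> (Suc k)))"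
      by (rule quad_bwd[OF step.IH A_nz Gnz]) (use step.hyps in auto)
    then show ?case using Grec[of k] Aeq[of k] step.hyps by simp
  qed
  have gal: "galois_conj \<alpha> = \<Gamma> 0"
  proof -
    have "\<alpha> = A 0" by (simp add: A_def)
    then show ?thesis using quad_galois[OF A_irr qG[of 0]] by simp
  qed

  let ?f = "\<lambda>j. fls_subdegree (A j) + fls_subdegree (\<Gamma> j)"
  have E: "A m - \<Gamma> m \<noteq> 0 \<and> fls_subdegree (A m - \<Gamma> m) = - int d1 - (\<Sum>j=Suc m..r+1. ?f j)"
    if "m \<le> r + 1" for m
    using that
  proof (induction m rule: inc_induct)
    case base
    have lt: "fls_subdegree \<beta> < fls_subdegree \<beta>'" using vb vb' dbs by simp
    have "fls_subdegree (\<beta> - \<beta>') = - int d1" using fls_subdegree_diff_eq1[OF bnz lt] vb by simp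
    moreover have "\<beta> - \<beta>' \<noteq> 0" using lt by auto
    ultimately show ?case using Gtop unfolding \<beta>_def by simp
  next
    case (step k)
    have kr: "k \<le> r" using step.hyps by simp
    have An: "A (Suc k) \<noteq> 0" using A_nz by simp
    have Gn: "\<Gamma> (Suc k) \<noteq> 0" using Gnz step.hyps by simp
    have "A k - \<Gamma> k = inverse (A (Suc k)) - inverse (\<Gamma> (Suc k))"
      using Aeq[of k] Grec[OF kr] by simp
    also have "\<dots> = - (inverse (A (Suc k)) * (A (Suc k) - \<Gamma> (Suc k)) * inverse (\<Gamma> (Suc k)))"
      by (rule inverse_diff_inverse[OF An Gn])
    finally have dk: "A k - \<Gamma> k = - (inverse (A (Suc k)) * (A (Suc k) - \<Gamma> (Suc k)) * inverse (\<Gamma> (Suc k)))" .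
    have IH: "A (Suc k) - \<Gamma> (Suc k) \<noteq> 0" "fls_subdegree (A (Suc k) - \<Gamma> (Suc k)) = - int d1 - (\<Sum>j=Suc (Suc k)..r+1. ?f j)"
      using step.IH by auto
    have nzk: "A k - \<Gamma> k \<noteq> 0" unfolding dk using An Gn IH(1) by simp
    have "fls_subdegree (A k - \<Gamma> k) = - fls_subdegree (A (Suc k)) + fls_subdegree (A (Suc k) - \<Gamma> (Suc k)) - fls_subdegree (\<Gamma> (Suc k))"
      unfolding dk fls_uminus_subdegree using An Gn IH(1) by (simp add: fls_subdegree_mult)
    also have "\<dots> = - int d1 - (\<Sum>j=Suc k..r+1. ?f j)"
    proof -
      have "(\<Sum>j=Suc k..r+1. ?f j) = ?f (Suc k) + (\<Sum>j=Suc (Suc k)..r+1. ?f j)"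
        by (rule sum.atLeast_Suc_atMost) (use step.hyps in simp)
      then show ?thesis unfolding IH(2) by linarith
    qed
    finally show ?case using nzk by simp
  qed
  from E[of 0] gal have nzd: "\<alpha> - galois_conj \<alpha> \<noteq> 0"
    and vd: "fls_subdegree (\<alpha> - galois_conj \<alpha>) = - int d1 - (\<Sum>j=1..r+1. ?f j)"
    by (simp_all add: A_def)

  obtain r' where r': "r = Suc r'" using r1 by (cases r) auto
  have sA: "(\<Sum>j=1..r+1. fls_subdegree (A j)) = - (\<Sum>i=1..r. int (degree (a i))) - int d1"
  proof -
    have "(\<Sum>j=1..r+1. fls_subdegree (A j)) = (\<Sum>j=1..r+1. - int (degree (c j)))"
      using A_val by (intro sum.cong) auto
    also have "\<dots> = (\<Sum>j=1..r. - int (degree (c j))) - int d1" by (simp add: d1_def)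
    also have "(\<Sum>j=1..r. - int (degree (c j))) = - (\<Sum>i=1..r. int (degree (a i)))"
      by (simp add: sum_negf c_low)
    finally show ?thesis .
  qed
  have sG: "(\<Sum>j=1..r+1. fls_subdegree (\<Gamma> j)) =
      - (\<Sum>i=1..r'. int (degree (a i))) - int (degree (a r - b s)) + int (degree (b s))"
  proof -
    have "(\<Sum>j=1..r+1. fls_subdegree (\<Gamma> j)) = (\<Sum>j=1..r'. fls_subdegree (\<Gamma> j)) + fls_subdegree (\<Gamma> r) + fls_subdegree \<beta>'"
      using Gtop r' by simp
    also have "(\<Sum>j=1..r'. fls_subdegree (\<Gamma> j)) = (\<Sum>j=1..r'. - int (degree (a j)))"
    proof (intro sum.cong refl)
      fix j assume "j \<in> {1..r'}"
      then show "fls_subdegree (\<Gamma> j) = - int (degree (a j))" using Gval[of j] r' by auto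
    qed
    finally show ?thesis using vGr vb' by (simp add: sum_negf)
  qed
  have expo: "fls_subdegree (\<alpha> - galois_conj \<alpha>) =
      2 * (\<Sum>i=1..r. int (degree (a i))) - int (degree (a r)) - int (degree (b s)) + int (degree (a r - b s))"
  proof -
    have "(\<Sum>j=1..r+1. ?f j) = (\<Sum>j=1..r+1. fls_subdegree (A j)) + (\<Sum>j=1..r+1. fls_subdegree (\<Gamma> j))"
      by (rule sum.distrib)
    moreover have "(\<Sum>i=1..r. int (degree (a i))) = (\<Sum>i=1..r'. int (degree (a i))) + int (degree (a r))"
      using r' by simp
    ultimately show ?thesis using vd sA sG by simp
  qed
  have q0: "real CARD('q) > 0" by simp
  define E where "E = 2 * (\<Sum>i=1..r. int (degree (a i))) - int (degree (a r)) - int (degree (b s)) + int (degree (a r - b s))"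
  have vE: "fls_subdegree (\<alpha> - galois_conj \<alpha>) = E" unfolding E_def by (rule expo)
  have "fls_absv (\<alpha> - galois_conj \<alpha>) = real CARD('q) powr (- real_of_int E)"
    unfolding fls_absv_def using nzd vE by simp
  then have "inverse (fls_absv (\<alpha> - galois_conj \<alpha>)) = real CARD('q) powr (real_of_int E)"
    by (simp add: powr_minus)
  also have "\<dots> = real CARD('q) powi E" using q0 by (simp add: powr_real_of_int')
  finally show ?thesis unfolding E_def .
qed

end

theorem lemma2p2:
  fixes a b :: "nat \<Rightarrow> ('q::{field,finite}) poly" and r s :: nat and \<alpha> :: "'q fls"
  assumes "r \<ge> 1" and "s \<ge> 1"
    and "\<And>i. 1 \<le> i \<Longrightarrow> i \<le> r \<Longrightarrow> degree (a i) \<ge> 1"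
    and "\<And>j. 1 \<le> j \<Longrightarrow> j \<le> s \<Longrightarrow> degree (b j) \<ge> 1"
    and "cf_convergent (eperiodic_pq a r b s) \<longlonglongrightarrow> \<alpha>"
    and "a r \<noteq> b s"
  shows "inverse (fls_absv (\<alpha> - galois_conj \<alpha>)) =
           real CARD('q) powi
             (2 * (\<Sum>i=1..r. int (degree (a i))) - int (degree (a r)) - int (degree (b s))
              + int (degree (a r - b s)))"
proof -
  interpret cfsetup a b r s \<alpha>
    using assms(1-5) by unfold_locales auto
  show ?thesis by (rule main[OF assms(6)])
qed


end
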